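(* Let $(\dot I_0,\dot d_0,\dot z_1,\dot z_2,\dot z_3)\in\mathbb C^5$ and $a,b,F\in\mathbb C$ with $F\ne0$. Then every nonzero $\mathcal L$-submodule $M$ of $V(\dot I_0,\dot d_0,\dot z_1,\dot z_2,\dot z_3)\otimes A(a,b;F)$ contains $\bar w\otimes x^k$ for some $k\in\mathbb Z$, where $\bar w$ is a highest weight vector of $V(\dot I_0,\dot d_0,\dot z_1,\dot z_2,\dot z_3)$.
   Context: $\mathcal{L}$ has basis $\{d_n,I_n,z_1,z_2,z_3\mid n\in\mathbb{Z}\}$ with brackets $[d_n,d_m]=(m-n)d_{m+n}+\delta_{n,-m}\frac{n^3-n}{12}z_1$, $[d_n,I_m]=mI_{m+n}+\delta_{n,-m}(n^2+n)z_2$, $[I_n,I_m]=n\delta_{n,-m}z_3$, $z_i$ central. $V(\dot I_0,\dot d_0,\dot z_1,\dot z_2,\dot z_3)$ is the simple quotient of the Verma module $U(\mathcal L)/\mathcal I$, where $\mathcal I$ is the left ideal generated by $d_n,I_n$ ($n\in\mathbb N$), $d_0-\dot d_0$, $I_0-\dot I_0$, $z_i-\dot z_i$; $\bar w$ is the image of $1+\mathcal I$. $A(a,b;F)=\mathbb{C}[x,x^{-1}]$ with $z_1=z_2=z_3=0$, $d_nx^m=(a+m+nb)x^{m+n}$, $I_nx^m=Fx^{m+n}$. *)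

theory Defs
  imports "HOL-Analysis.Analysis"
begin

datatype Lbasis = Ld int | LI int | Lz1 | Lz2 | Lz3

text \<open>Given an action rho of the basis on a complex vector space (scalar multiplication sc),
  brL sc rho x y v is rho([x,y]) v, computed from the structure constants of L.\<close>
fun brL :: "(complex \<Rightarrow> 'v::ab_group_add \<Rightarrow> 'v) \<Rightarrow> (Lbasis \<Rightarrow> 'v \<Rightarrow> 'v)
             \<Rightarrow> Lbasis \<Rightarrow> Lbasis \<Rightarrow> 'v \<Rightarrow> 'v" where
  "brL sc rho (Ld n) (Ld m) v =
     sc (of_int (m - n)) (rho (Ld (m + n)) v)
     + (if n = - m then sc (of_int (n^3 - n) / 12) (rho Lz1 v) else 0)"
| "brL sc rho (Ld n) (LI m) v =
     sc (of_int m) (rho (LI (m + n)) v)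
     + (if n = - m then sc (of_int (n^2 + n)) (rho Lz2 v) else 0)"
| "brL sc rho (LI m) (Ld n) v =
     - (sc (of_int m) (rho (LI (m + n)) v)
        + (if n = - m then sc (of_int (n^2 + n)) (rho Lz2 v) else 0))"
| "brL sc rho (LI n) (LI m) v =
     (if n = - m then sc (of_int n) (rho Lz3 v) else 0)"
| "brL sc rho _ _ v = 0"

definition is_L_module :: "(complex \<Rightarrow> 'v::ab_group_add \<Rightarrow> 'v) \<Rightarrow> (Lbasis \<Rightarrow> 'v \<Rightarrow> 'v) \<Rightarrow> bool" where
  "is_L_module sc rho \<longleftrightarrow>
     vector_space sc \<and>
     (\<forall>x. Vector_Spaces.linear sc sc (rho x)) \<and>
     (\<forall>x y v. rho x (rho y v) - rho y (rho x v) = brL sc rho x y v)"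

definition is_L_submodule ::
  "(complex \<Rightarrow> 'v::ab_group_add \<Rightarrow> 'v) \<Rightarrow> (Lbasis \<Rightarrow> 'v \<Rightarrow> 'v) \<Rightarrow> 'v set \<Rightarrow> bool" where
  "is_L_submodule sc rho S \<longleftrightarrow>
     0 \<in> S \<and> (\<forall>u\<in>S. \<forall>v\<in>S. u + v \<in> S) \<and> (\<forall>c. \<forall>u\<in>S. sc c u \<in> S) \<and>
     (\<forall>x. \<forall>u\<in>S. rho x u \<in> S)"

definition is_simple_L_module :: "(complex \<Rightarrow> 'v::ab_group_add \<Rightarrow> 'v) \<Rightarrow> (Lbasis \<Rightarrow> 'v \<Rightarrow> 'v) \<Rightarrow> bool" where
  "is_simple_L_module sc rho \<longleftrightarrow>
     is_L_module sc rho \<and> (\<exists>v::'v. v \<noteq> 0) \<and>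
     (\<forall>S. is_L_submodule sc rho S \<longrightarrow> S = {0} \<or> S = UNIV)"

definition is_hw_vector ::
  "(complex \<Rightarrow> 'v::ab_group_add \<Rightarrow> 'v) \<Rightarrow> (Lbasis \<Rightarrow> 'v \<Rightarrow> 'v)
   \<Rightarrow> complex \<Rightarrow> complex \<Rightarrow> complex \<Rightarrow> complex \<Rightarrow> complex \<Rightarrow> 'v \<Rightarrow> bool" where
  "is_hw_vector sc rho I0 d0 z1 z2 z3 w \<longleftrightarrow>
     w \<noteq> 0 \<and>
     (\<forall>n>0. rho (Ld n) w = 0 \<and> rho (LI n) w = 0) \<and>
     rho (Ld 0) w = sc d0 w \<and> rho (LI 0) w = sc I0 w \<and>
     rho Lz1 w = sc z1 w \<and> rho Lz2 w = sc z2 w \<and> rho Lz3 w = sc z3 w"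

text \<open>The tensor product V \<otimes> A(a,b;F), with A = C[x,x^-1], is modelled as the finitely
  supported functions f : Z \<Rightarrow> V, f standing for the sum over m of f m \<otimes> x^m.\<close>
definition tensA_carrier :: "(int \<Rightarrow> 'v::zero) set" where
  "tensA_carrier = {f. finite {m. f m \<noteq> 0}}"

text \<open>Action on V \<otimes> A(a,b;F):  y(v \<otimes> x^m) = (y v) \<otimes> x^m + v \<otimes> (y x^m), where on A:
  d_n x^m = (a+m+nb) x^(m+n), I_n x^m = F x^(m+n), z_i act by 0.\<close>
fun tensA_act :: "(complex \<Rightarrow> 'v::ab_group_add \<Rightarrow> 'v) \<Rightarrow> (Lbasis \<Rightarrow> 'v \<Rightarrow> 'v)
     \<Rightarrow> complex \<Rightarrow> complex \<Rightarrow> complex \<Rightarrow> Lbasis \<Rightarrow> (int \<Rightarrow> 'v) \<Rightarrow> (int \<Rightarrow> 'v)" where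
  "tensA_act sc rho a b F (Ld n) f =
     (\<lambda>m. rho (Ld n) (f m) + sc (a + of_int (m - n) + of_int n * b) (f (m - n)))"
| "tensA_act sc rho a b F (LI n) f =
     (\<lambda>m. rho (LI n) (f m) + sc F (f (m - n)))"
| "tensA_act sc rho a b F y f = (\<lambda>m. rho y (f m))"

definition is_tensA_submodule ::
  "(complex \<Rightarrow> 'v::ab_group_add \<Rightarrow> 'v) \<Rightarrow> (Lbasis \<Rightarrow> 'v \<Rightarrow> 'v)
   \<Rightarrow> complex \<Rightarrow> complex \<Rightarrow> complex \<Rightarrow> (int \<Rightarrow> 'v) set \<Rightarrow> bool" where
  "is_tensA_submodule sc rho a b F M \<longleftrightarrow>
     M \<subseteq> tensA_carrier \<and> (\<lambda>m. 0) \<in> M \<and>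
     (\<forall>f\<in>M. \<forall>g\<in>M. (\<lambda>m. f m + g m) \<in> M) \<and>
     (\<forall>c. \<forall>f\<in>M. (\<lambda>m. sc c (f m)) \<in> M) \<and>
     (\<forall>y. \<forall>f\<in>M. tensA_act sc rho a b F y f \<in> M)"

definition pure_tens :: "'v::zero \<Rightarrow> int \<Rightarrow> (int \<Rightarrow> 'v)" where
  "pure_tens w k = (\<lambda>m. if m = k then w else 0)"

end

theory Submission
  imports Defs
begin

locale L19 =
  fixes sc :: "complex \<Rightarrow> 'v::ab_group_add \<Rightarrow> 'v"
    and rho :: "Lbasis \<Rightarrow> 'v \<Rightarrow> 'v"
    and I0 d0 z1 z2 z3 a b F :: complex
    and w :: 'v
    and M :: "(int \<Rightarrow> 'v) set"
  assumes simple: "is_simple_L_module sc rho"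
    and hw: "is_hw_vector sc rho I0 d0 z1 z2 z3 w"
    and Fnz: "F \<noteq> 0"
    and sub: "is_tensA_submodule sc rho a b F M"
begin

lemma vs: "vector_space sc" using simple unfolding is_simple_L_module_def is_L_module_def by auto

lemma lin: "Vector_Spaces.linear sc sc (rho x)"
  using simple unfolding is_simple_L_module_def is_L_module_def by auto

lemma comm: "rho x (rho y v) = rho y (rho x v) + brL sc rho x y v"
  using simple unfolding is_simple_L_module_def is_L_module_def by (metis diff_add_cancel add.commute)

lemma sc_sc[simp]: "sc c (sc d x) = sc (c * d) x"
  using vs by (simp add: vector_space.vector_space_assms(3))
lemma sc_one[simp]: "sc 1 x = x"
  using vs by (simp add: vector_space.vector_space_assms(4))
lemma sc_zero_right[simp]: "sc c 0 = 0"
  using vs by (metis module.scale_zero_right module_iff_vector_space)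
lemma sc_zero_left[simp]: "sc 0 x = 0"
  using vs by (metis module.scale_zero_left module_iff_vector_space)
lemma sc_ldist: "sc (c + d) x = sc c x + sc d x"
  using vs by (simp add: vector_space.vector_space_assms(2))
lemma sc_rdist: "sc c (x + y) = sc c x + sc c y"
  using vs by (simp add: vector_space.vector_space_assms(1))
lemma sc_minus: "sc (- c) x = - sc c x"
  using vs by (metis module.scale_minus_left module_iff_vector_space)

lemma rho0[simp]: "rho y 0 = 0"
  using lin[of y] by (metis module_hom.zero module_hom_iff_linear)
lemma rho_add: "rho y (u + v) = rho y u + rho y v"
  using lin[of y] by (metis module_hom.add module_hom_iff_linear)
lemma rho_sc: "rho y (sc c u) = sc c (rho y u)"
  using lin[of y] by (metis module_hom.scale module_hom_iff_linear)

lemma simpleS: "is_L_submodule sc rho S \<Longrightarrow> S = {0} \<or> S = UNIV"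
  using simple unfolding is_simple_L_module_def by auto

lemma bound_vec: "\<exists>N>0. \<forall>n\<ge>N. rho (Ld n) v = 0 \<and> rho (LI n) v = 0"
proof -
  define U where "U = {v. \<exists>N. \<forall>n\<ge>N. rho (Ld n) v = 0 \<and> rho (LI n) v = 0}"
  have "is_L_submodule sc rho U"
    unfolding is_L_submodule_def
  proof (intro conjI ballI allI)
    show "0 \<in> U" unfolding U_def by auto
  next
    fix u v assume "u \<in> U" "v \<in> U"
    then obtain N1 N2 where "\<forall>n\<ge>N1. rho (Ld n) u = 0 \<and> rho (LI n) u = 0"
      "\<forall>n\<ge>N2. rho (Ld n) v = 0 \<and> rho (LI n) v = 0" unfolding U_def by auto
    then show "u + v \<in> U" unfolding U_def
      by (intro CollectI exI[of _ "max N1 N2"]) (auto simp: rho_add)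
  next
    fix c u assume "u \<in> U"
    then obtain N where "\<forall>n\<ge>N. rho (Ld n) u = 0 \<and> rho (LI n) u = 0" unfolding U_def by auto
    then show "sc c u \<in> U" unfolding U_def by (intro CollectI exI[of _ N]) (auto simp: rho_sc)
  next
    fix x u assume "u \<in> U"
    then obtain N where N: "\<forall>n\<ge>N. rho (Ld n) u = 0 \<and> rho (LI n) u = 0" unfolding U_def by auto
    show "rho x u \<in> U"
    proof (cases x)
      case (Ld k)
      show ?thesis unfolding U_def Ld
      proof (intro CollectI exI[of _ "\<bar>N\<bar> + \<bar>k\<bar> + 1"] allI impI conjI)
        fix n assume n: "\<bar>N\<bar> + \<bar>k\<bar> + 1 \<le> n"
        have "k + n \<ge> N" "n + k \<ge> N" "n \<ge> N" "n \<noteq> - k" "k \<noteq> - n" using n by auto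
        then have h: "rho (Ld n) u = 0" "rho (LI n) u = 0" "rho (Ld (k+n)) u = 0" "rho (LI (n+k)) u = 0"
          using N by auto
        show "rho (Ld n) (rho (Ld k) u) = 0" using h \<open>n \<noteq> - k\<close>
          by (subst comm) simp
        show "rho (LI n) (rho (Ld k) u) = 0" using h \<open>k \<noteq> - n\<close>
          by (subst comm) simp
      qed
    next
      case (LI k)
      show ?thesis unfolding U_def LI
      proof (intro CollectI exI[of _ "\<bar>N\<bar> + \<bar>k\<bar> + 1"] allI impI conjI)
        fix n assume n: "\<bar>N\<bar> + \<bar>k\<bar> + 1 \<le> n"
        have "k + n \<ge> N" "n + k \<ge> N" "n \<ge> N" "n \<noteq> - k" "k \<noteq> - n" using n by auto
        then have h: "rho (Ld n) u = 0" "rho (LI n) u = 0" "rho (LI (k+n)) u = 0"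
          using N by auto
        show "rho (Ld n) (rho (LI k) u) = 0" using h \<open>n \<noteq> - k\<close>
          by (subst comm) simp
        show "rho (LI n) (rho (LI k) u) = 0" using h \<open>n \<noteq> - k\<close>
          by (subst comm) simp
      qed
    qed (use N in \<open>auto simp: U_def comm[of "Ld _"] comm[of "LI _"] intro!: exI[of _ N]\<close>)
  qed
  moreover have "w \<in> U" "w \<noteq> 0" using hw unfolding U_def is_hw_vector_def
    by (auto intro!: exI[of _ 1])
  ultimately have "U = UNIV" using simpleS by blast
  then obtain N where "\<forall>n\<ge>N. rho (Ld n) v = 0 \<and> rho (LI n) v = 0" unfolding U_def by auto
  then show ?thesis by (intro exI[of _ "max N 1"]) auto
qed

lemma bound_fun:
  fixes h :: "int \<Rightarrow> 'v"
  assumes fin: "finite {m. h m \<noteq> 0}"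
  shows "\<exists>N>0. \<forall>n\<ge>N. \<forall>m. rho (Ld n) (h m) = 0 \<and> rho (LI n) (h m) = 0"
proof -
  from bound_vec obtain Nf where Nf: "\<And>v. Nf v > 0 \<and> (\<forall>n\<ge>Nf v. rho (Ld n) v = 0 \<and> rho (LI n) v = 0)"
    by metis
  define A where "A = insert 0 (h ` {m. h m \<noteq> 0})"
  have finA: "finite A" using fin unfolding A_def by auto
  define N where "N = Max (Nf ` A)"
  have hA: "h m \<in> A" for m unfolding A_def by auto
  have le: "Nf (h m) \<le> N" for m unfolding N_def using finA hA[of m] by auto
  have "N > 0" using le[of 0] Nf[of "h 0"] by linarith
  moreover have "\<forall>n\<ge>N. \<forall>m. rho (Ld n) (h m) = 0 \<and> rho (LI n) (h m) = 0"
  proof (intro allI impI)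
    fix n m assume "N \<le> n"
    then have "Nf (h m) \<le> n" using le[of m] by linarith
    then show "rho (Ld n) (h m) = 0 \<and> rho (LI n) (h m) = 0" using Nf[of "h m"] by blast
  qed
  ultimately show ?thesis by blast
qed

lemma M_carrier: "h \<in> M \<Longrightarrow> finite {m. h m \<noteq> 0}"
  using sub unfolding is_tensA_submodule_def tensA_carrier_def by auto
lemma M_zero: "(\<lambda>m. 0) \<in> M"
  using sub unfolding is_tensA_submodule_def by auto
lemma M_add: "f \<in> M \<Longrightarrow> g \<in> M \<Longrightarrow> (\<lambda>m. f m + g m) \<in> M"
  using sub unfolding is_tensA_submodule_def by auto
lemma M_sc: "f \<in> M \<Longrightarrow> (\<lambda>m. sc c (f m)) \<in> M"
  using sub unfolding is_tensA_submodule_def by auto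
lemma M_act: "f \<in> M \<Longrightarrow> tensA_act sc rho a b F y f \<in> M"
  using sub unfolding is_tensA_submodule_def by auto
lemma M_lin: "f \<in> M \<Longrightarrow> g \<in> M \<Longrightarrow> (\<lambda>m. f m + sc c (g m)) \<in> M"
  using M_add M_sc by blast
lemma M_lin3: "f \<in> M \<Longrightarrow> g \<in> M \<Longrightarrow> h \<in> M \<Longrightarrow> (\<lambda>m. f m + sc c (g m) + sc d (h m)) \<in> M"
proof -
  assume "f \<in> M" "g \<in> M" "h \<in> M"
  then have "(\<lambda>m. f m + sc c (g m)) \<in> M" using M_lin by blast
  from M_lin[OF this \<open>h \<in> M\<close>] show ?thesis .
qed

definition sh :: "int \<Rightarrow> (int \<Rightarrow> 'v) \<Rightarrow> (int \<Rightarrow> 'v)" where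
  "sh n g = (\<lambda>m. g (m - n))"
definition Dop :: "(int \<Rightarrow> 'v) \<Rightarrow> (int \<Rightarrow> 'v)" where
  "Dop g = (\<lambda>m. sc (of_int m) (g m))"

lemma sh_sh[simp]: "sh k (sh n g) = sh (k + n) g"
  unfolding sh_def by (simp add: algebra_simps)
lemma sh_0[simp]: "sh 0 g = g"
  unfolding sh_def by simp

lemma L1:
  assumes h: "h \<in> M"
  shows "\<exists>N. \<forall>n\<ge>N. sh n h \<in> M \<and> sh n (Dop h) \<in> M"
proof -
  obtain N where N: "N > 0" "\<forall>n\<ge>N. \<forall>m. rho (Ld n) (h m) = 0 \<and> rho (LI n) (h m) = 0"
    using bound_fun[OF M_carrier[OF h]] by blast
  have "sh n h \<in> M \<and> sh n (Dop h) \<in> M" if n: "n \<ge> N" for n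
  proof
    have eI: "tensA_act sc rho a b F (LI n) h = (\<lambda>m. sc F (h (m - n)))"
      using N n by auto
    have "sh n h = (\<lambda>m. sc (1/F) (tensA_act sc rho a b F (LI n) h m))"
      unfolding eI sh_def using Fnz by simp
    then show shM: "sh n h \<in> M" using M_sc M_act h by metis
    have eD: "tensA_act sc rho a b F (Ld n) h
         = (\<lambda>m. sc (a + of_int (m - n) + of_int n * b) (h (m - n)))"
      using N n by auto
    have "sh n (Dop h) = (\<lambda>m. tensA_act sc rho a b F (Ld n) h m + sc (- (a + of_int n * b)) (sh n h m))"
      unfolding eD sh_def Dop_def
      by (rule ext) (simp add: sc_minus sc_ldist[symmetric] algebra_simps)
    then show "sh n (Dop h) \<in> M" using M_lin[OF M_act[OF h] shM] by metis
  qed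
  then show ?thesis by blast
qed

definition Cs where "Cs = {g. \<exists>n. sh n g \<in> M}"

lemma C_shift: "g \<in> Cs \<Longrightarrow> \<exists>N. \<forall>n\<ge>N. sh n g \<in> M"
proof -
  assume "g \<in> Cs"
  then obtain n0 where h: "sh n0 g \<in> M" unfolding Cs_def by auto
  from L1[OF h] obtain N where N: "\<forall>n\<ge>N. sh n (sh n0 g) \<in> M" by blast
  have "sh n g \<in> M" if "n \<ge> N + n0" for n
    using N[rule_format, of "n - n0"] that by simp
  then show ?thesis by blast
qed

lemma M_C: "g \<in> M \<Longrightarrow> g \<in> Cs"
  unfolding Cs_def by (intro CollectI exI[of _ 0]) simp

lemma C_lin: "f \<in> Cs \<Longrightarrow> g \<in> Cs \<Longrightarrow> (\<lambda>m. f m + sc c (g m)) \<in> Cs"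
proof -
  assume "f \<in> Cs" "g \<in> Cs"
  then obtain N1 N2 where "\<forall>n\<ge>N1. sh n f \<in> M" "\<forall>n\<ge>N2. sh n g \<in> M" using C_shift by metis
  then have "sh (max N1 N2) f \<in> M" "sh (max N1 N2) g \<in> M" by auto
  from M_lin[OF this] have "sh (max N1 N2) (\<lambda>m. f m + sc c (g m)) \<in> M"
    unfolding sh_def by simp
  then show ?thesis unfolding Cs_def by blast
qed

lemma C_sc: "g \<in> Cs \<Longrightarrow> (\<lambda>m. sc c (g m)) \<in> Cs"
proof -
  assume "g \<in> Cs"
  then obtain n where "sh n g \<in> M" unfolding Cs_def by auto
  from M_sc[OF this] have "sh n (\<lambda>m. sc c (g m)) \<in> M" unfolding sh_def by simp
  then show ?thesis unfolding Cs_def by blast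
qed

lemma C_D: "g \<in> Cs \<Longrightarrow> Dop g \<in> Cs"
proof -
  assume "g \<in> Cs"
  then obtain n0 where h: "sh n0 g \<in> M" unfolding Cs_def by auto
  from L1[OF h] obtain N where N: "sh N (sh n0 g) \<in> M" "sh N (Dop (sh n0 g)) \<in> M" by blast
  have "sh N (sh n0 (Dop g)) = (\<lambda>m. sh N (Dop (sh n0 g)) m + sc (- of_int n0) (sh N (sh n0 g) m))"
    unfolding sh_def Dop_def
    by (rule ext) (simp add: sc_minus sc_ldist[symmetric] algebra_simps)
  then have "sh (N + n0) (Dop g) \<in> M" using M_lin[OF N(2) N(1)] by simp
  then show ?thesis unfolding Cs_def by blast
qed

lemma C_rho: "g \<in> Cs \<Longrightarrow> (\<lambda>m. rho y (g m)) \<in> Cs"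
proof -
  assume "g \<in> Cs"
  then obtain n0 where h: "sh n0 g \<in> M" unfolding Cs_def by auto
  define h' where "h' = sh n0 g"
  have h'M: "h' \<in> M" using h h'_def by simp
  from L1[OF h'M] obtain N where N: "\<forall>n\<ge>N. sh n h' \<in> M \<and> sh n (Dop h') \<in> M" by blast
  have key: "\<exists>n. sh n (\<lambda>m. rho y (h' m)) \<in> M"
  proof (cases y)
    case (Ld k)
    define n where "n = \<bar>N\<bar> + \<bar>k\<bar>"
    have M1: "sh n h' \<in> M" "sh (n + k) h' \<in> M" "sh (n + k) (Dop h') \<in> M"
      using N unfolding n_def by auto
    have "sh n (\<lambda>m. rho y (h' m)) = (\<lambda>m. tensA_act sc rho a b F (Ld k) (sh n h') m
       + sc (- (a + of_int n + of_int k * b)) (sh (n + k) h' m) + sc (-1) (sh (n + k) (Dop h') m))"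
      unfolding Ld sh_def Dop_def
      by (rule ext) (simp add: sc_minus sc_ldist[symmetric] algebra_simps)
    then show ?thesis using M_lin3[OF M_act[OF M1(1)] M1(2) M1(3)] by metis
  next
    case (LI k)
    define n where "n = \<bar>N\<bar> + \<bar>k\<bar>"
    have M1: "sh n h' \<in> M" "sh (n + k) h' \<in> M"
      using N unfolding n_def by auto
    have "sh n (\<lambda>m. rho y (h' m)) = (\<lambda>m. tensA_act sc rho a b F (LI k) (sh n h') m
       + sc (- F) (sh (n + k) h' m))"
      unfolding LI sh_def
      by (rule ext) (simp add: sc_minus algebra_simps)
    then show ?thesis using M_lin[OF M_act[OF M1(1)] M1(2)] by metis
  next
    case Lz1
    then show ?thesis using M_act[OF h'M, of y] by (intro exI[of _ 0]) simp
  next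
    case Lz2
    then show ?thesis using M_act[OF h'M, of y] by (intro exI[of _ 0]) simp
  next
    case Lz3
    then show ?thesis using M_act[OF h'M, of y] by (intro exI[of _ 0]) simp
  qed
  then obtain n where "sh n (\<lambda>m. rho y (h' m)) \<in> M" by blast
  moreover have "sh n (\<lambda>m. rho y (h' m)) = sh (n + n0) (\<lambda>m. rho y (g m))"
    unfolding h'_def sh_def by (simp add: algebra_simps)
  ultimately show ?thesis unfolding Cs_def by auto
qed

lemma C_poly: "finite T \<Longrightarrow> g \<in> Cs \<Longrightarrow> (\<lambda>m. sc (\<Prod>t\<in>T. of_int m - of_int t) (g m)) \<in> Cs"
proof (induction T rule: finite_induct)
  case empty
  then show ?case by simp
next
  case (insert t T)
  define P where "P = (\<lambda>m. sc (\<Prod>t\<in>T. of_int m - of_int t) (g m))"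
  have PC: "P \<in> Cs" using insert P_def by simp
  have "(\<lambda>m. sc (\<Prod>t\<in>insert t T. of_int m - of_int t) (g m)) = (\<lambda>m. Dop P m + sc (- of_int t) (P m))"
    unfolding P_def Dop_def using insert(1,2)
    by (rule_tac ext) (simp add: sc_minus sc_ldist[symmetric] algebra_simps)
  then show ?case using C_lin[OF C_D[OF PC] PC] by metis
qed

lemma main:
  assumes "\<exists>f\<in>M. f \<noteq> (\<lambda>m. 0)"
  shows "\<exists>k::int. pure_tens w k \<in> M"
proof -
  obtain f where fM: "f \<in> M" and fnz: "f \<noteq> (\<lambda>m. 0)" using assms by blast
  then obtain m0 where m0: "f m0 \<noteq> 0" by auto
  define S where "S = {m. f m \<noteq> 0}"
  have finS: "finite S" using M_carrier[OF fM] S_def by simp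
  define T where "T = S - {m0}"
  have finT: "finite T" using finS T_def by simp
  define c where "c = (\<Prod>t\<in>T. (of_int m0 - of_int t :: complex))"
  have cnz: "c \<noteq> 0" unfolding c_def using finT T_def by simp
  have gC: "(\<lambda>m. sc (\<Prod>t\<in>T. of_int m - of_int t) (f m)) \<in> Cs"
    using C_poly[OF finT M_C[OF fM]] .
  have "pure_tens (f m0) m0 = (\<lambda>m. sc (1/c) (sc (\<Prod>t\<in>T. of_int m - of_int t) (f m)))"
  proof (rule ext)
    fix m show "pure_tens (f m0) m0 m = sc (1/c) (sc (\<Prod>t\<in>T. of_int m - of_int t) (f m))"
    proof (cases "m = m0")
      case True then show ?thesis using cnz unfolding pure_tens_def by (simp add: c_def[symmetric])
    next
      case False
      show ?thesis
      proof (cases "f m = 0")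
        case True then show ?thesis using False unfolding pure_tens_def by simp
      next
        case fm: False
        then have "m \<in> T" using False unfolding T_def S_def by simp
        then have "(\<Prod>t\<in>T. (of_int m - of_int t :: complex)) = 0"
          using finT by (simp add: prod_zero_iff)
        then show ?thesis using False unfolding pure_tens_def by simp
      qed
    qed
  qed
  then have pC: "pure_tens (f m0) m0 \<in> Cs" using C_sc[OF gC] by metis
  define Sv where "Sv = {u. pure_tens u m0 \<in> Cs}"
  have sub: "is_L_submodule sc rho Sv"
    unfolding is_L_submodule_def
  proof (intro conjI ballI allI)
    have "pure_tens (0::'v) m0 = (\<lambda>m. 0)" unfolding pure_tens_def by auto
    then show "0 \<in> Sv" unfolding Sv_def using M_C[OF M_zero] by (simp only: mem_Collect_eq)
  next
    fix u v assume "u \<in> Sv" "v \<in> Sv"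
    then have "(\<lambda>m. pure_tens u m0 m + sc 1 (pure_tens v m0 m)) \<in> Cs"
      unfolding Sv_def using C_lin by blast
    moreover have "(\<lambda>m. pure_tens u m0 m + sc 1 (pure_tens v m0 m)) = pure_tens (u + v) m0"
      unfolding pure_tens_def by auto
    ultimately show "u + v \<in> Sv" unfolding Sv_def by simp
  next
    fix c u assume "u \<in> Sv"
    then have "(\<lambda>m. sc c (pure_tens u m0 m)) \<in> Cs" unfolding Sv_def using C_sc by blast
    moreover have "(\<lambda>m. sc c (pure_tens u m0 m)) = pure_tens (sc c u) m0"
      unfolding pure_tens_def by auto
    ultimately show "sc c u \<in> Sv" unfolding Sv_def by simp
  next
    fix x u assume "u \<in> Sv"
    then have "(\<lambda>m. rho x (pure_tens u m0 m)) \<in> Cs" unfolding Sv_def using C_rho by blast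
    moreover have "(\<lambda>m. rho x (pure_tens u m0 m)) = pure_tens (rho x u) m0"
      unfolding pure_tens_def by auto
    ultimately show "rho x u \<in> Sv" unfolding Sv_def by simp
  qed
  have "f m0 \<in> Sv" using pC Sv_def by simp
  then have "Sv = UNIV" using simpleS[OF sub] m0 by auto
  then have "pure_tens w m0 \<in> Cs" unfolding Sv_def by auto
  then obtain n where "sh n (pure_tens w m0) \<in> M" unfolding Cs_def by auto
  moreover have "sh n (pure_tens w m0) = pure_tens w (m0 + n)"
    unfolding sh_def pure_tens_def by (auto simp: algebra_simps)
  ultimately show ?thesis by auto
qed

end

theorem lemma19:
  fixes sc :: "complex \<Rightarrow> 'v::ab_group_add \<Rightarrow> 'v"
    and rho :: "Lbasis \<Rightarrow> 'v \<Rightarrow> 'v"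
    and I0 d0 z1 z2 z3 a b F :: complex
    and w :: 'v
    and M :: "(int \<Rightarrow> 'v) set"
  assumes "is_simple_L_module sc rho"
    and "is_hw_vector sc rho I0 d0 z1 z2 z3 w"
    and "F \<noteq> 0"
    and "is_tensA_submodule sc rho a b F M"
    and "\<exists>f\<in>M. f \<noteq> (\<lambda>m. 0)"
  shows "\<exists>k::int. pure_tens w k \<in> M"
proof -
  interpret L19 sc rho I0 d0 z1 z2 z3 a b F w M
    using assms(1-4) by unfold_locales
  show ?thesis using main assms(5) by blast
qed

end
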